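(* Let $H$ be a Hilbert space and let $A$ be a densely defined closed linear operator in $H$ (not necessarily selfadjoint). Let $Q:=AA^*$, $B:=(I+Q)^{-1}$ (a selfadjoint operator with $0\le B\le I$), and let $F$ denote the closure of the operator $(I+Q)^{-1}A$, originally defined on $D(A)$; $F$ is a bounded linear operator defined on all of $H$ with $\|F\|\le \frac12$. Let $N^*:=\{u: A^*u=0\}$. Let $f\in D(A)$, and for $\delta>0$ let $f_\delta\in H$ satisfy $\|f_\delta-f\|\le\delta$. Let $y$ be the unique minimal-norm solution of $By=Ff$. Define the iterates $$v_{n+1}=(I-B)v_n+Ff_\delta,\qquad n=0,1,2,\dots,$$ with an initial element $v_0\perp N^*$. If $n=n(\delta)$ is an integer with $\lim_{\delta\to0}n(\delta)=\infty$ and $\lim_{\delta\to0}[\delta\, n(\delta)]=0$, then, with $v_\delta:=v_{n(\delta)}$, $$\lim_{\delta\to0}\|v_\delta-y\|=0.$$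
   Context: $I$ denotes the identity operator on $H$; inequalities $0\le B\le I$ are in the sense of quadratic forms. The relation $v=Af$ is equivalent to $Bv=Ff$, so the theorem gives a stable method of computing the value $Af$ of the unbounded operator $A$ from noisy data $f_\delta$ (which need not lie in $D(A)$). *)

theory Defs
  imports "HOL-Analysis.Analysis"
begin

text \<open>A (possibly unbounded) linear operator in a real Hilbert space is given by
  a domain D and a map A, only its values on D being relevant.\<close>

definition lin_op :: "'a::real_inner set \<Rightarrow> ('a \<Rightarrow> 'a) \<Rightarrow> bool" where
  "lin_op D A \<longleftrightarrow> subspace D \<and>
     (\<forall>x\<in>D. \<forall>y\<in>D. A (x + y) = A x + A y) \<and>
     (\<forall>c. \<forall>x\<in>D. A (c *\<^sub>R x) = c *\<^sub>R A x)"

definition densely_defined :: "'a::real_inner set \<Rightarrow> bool" where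
  "densely_defined D \<longleftrightarrow> closure D = UNIV"

definition closed_op :: "'a::real_inner set \<Rightarrow> ('a \<Rightarrow> 'a) \<Rightarrow> bool" where
  "closed_op D A \<longleftrightarrow> closed ((\<lambda>x. (x, A x)) ` D)"

definition adj_dom :: "'a::real_inner set \<Rightarrow> ('a \<Rightarrow> 'a) \<Rightarrow> 'a set" where
  "adj_dom D A = {u. \<exists>w. \<forall>x\<in>D. inner (A x) u = inner x w}"

definition adj_op :: "'a::real_inner set \<Rightarrow> ('a \<Rightarrow> 'a) \<Rightarrow> 'a \<Rightarrow> 'a" where
  "adj_op D A u = (THE w. \<forall>x\<in>D. inner (A x) u = inner x w)"

definition Q_dom :: "'a::real_inner set \<Rightarrow> ('a \<Rightarrow> 'a) \<Rightarrow> 'a set" where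
  "Q_dom D A = {u \<in> adj_dom D A. adj_op D A u \<in> D}"

definition Q_op :: "'a::real_inner set \<Rightarrow> ('a \<Rightarrow> 'a) \<Rightarrow> 'a \<Rightarrow> 'a" where
  "Q_op D A u = A (adj_op D A u)"

definition B_op :: "'a::real_inner set \<Rightarrow> ('a \<Rightarrow> 'a) \<Rightarrow> 'a \<Rightarrow> 'a" where
  "B_op D A v = (THE u. u \<in> Q_dom D A \<and> u + Q_op D A u = v)"

text \<open>F = closure of (I+Q)^{-1} A defined on D(A): the bounded linear operator on H
  agreeing with B \<circ> A on D(A).\<close>
definition F_op :: "'a::real_inner set \<Rightarrow> ('a \<Rightarrow> 'a) \<Rightarrow> 'a \<Rightarrow> 'a" where
  "F_op D A = (THE F. bounded_linear F \<and> (\<forall>x\<in>D. F x = B_op D A (A x)))"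

definition adj_null :: "'a::real_inner set \<Rightarrow> ('a \<Rightarrow> 'a) \<Rightarrow> 'a set" where
  "adj_null D A = {u \<in> adj_dom D A. adj_op D A u = 0}"

end

theory Submission imports Defs begin

lemma proj_exists:
  fixes S :: "'b::{real_inner,complete_space} set"
  assumes sub: "subspace S" and cl: "closed S"
  shows "\<exists>s\<in>S. \<forall>x\<in>S. inner (p - s) x = 0"
proof -
  define e where "e = Inf ((\<lambda>x. (norm (p - x))\<^sup>2) ` S)"
  have ne: "S \<noteq> {}" using sub subspace_0 by blast
  have bdd: "bdd_below ((\<lambda>x. (norm (p - x))\<^sup>2) ` S)"
    by (rule bdd_belowI[of _ 0]) auto
  have e_le: "e \<le> (norm (p - x))\<^sup>2" if "x \<in> S" for x
    unfolding e_def using bdd that by (simp add: cInf_lower)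
  have ex: "\<exists>x\<in>S. (norm (p - x))\<^sup>2 < e + \<epsilon>" if "\<epsilon> > 0" for \<epsilon>
  proof -
    have "Inf ((\<lambda>x. (norm (p - x))\<^sup>2) ` S) < e + \<epsilon>" using that e_def by simp
    then show ?thesis using ne by (subst (asm) cInf_less_iff[OF _ bdd]) auto
  qed
  have "\<forall>n. \<exists>x\<in>S. (norm (p - x))\<^sup>2 < e + 1 / (real n + 1)"
    by (intro allI ex) simp
  then obtain xs where xs: "\<And>n. xs n \<in> S" "\<And>n. (norm (p - xs n))\<^sup>2 < e + 1 / (real n + 1)"
    by metis
  have par: "(norm (xs m - xs n))\<^sup>2 \<le> 2 / (real m + 1) + 2 / (real n + 1)" for m n
  proof -
    have mid: "(1/2) *\<^sub>R (xs m + xs n) \<in> S"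
      using sub xs(1) by (simp add: subspace_add subspace_scale)
    have "e \<le> (norm (p - (1/2) *\<^sub>R (xs m + xs n)))\<^sup>2" by (rule e_le[OF mid])
    moreover have "(norm (xs m - xs n))\<^sup>2 = 2 * (norm (p - xs m))\<^sup>2 + 2 * (norm (p - xs n))\<^sup>2
        - 4 * (norm (p - (1/2) *\<^sub>R (xs m + xs n)))\<^sup>2"
      unfolding power2_norm_eq_inner
      by (simp add: inner_diff_left inner_diff_right inner_add_left inner_add_right inner_commute algebra_simps)
    ultimately show ?thesis using xs(2)[of m] xs(2)[of n] by linarith
  qed
  have "Cauchy xs"
  proof (rule CauchyI)
    fix \<epsilon> :: real assume ep: "\<epsilon> > 0"
    obtain M :: nat where M: "4 / \<epsilon>\<^sup>2 < real M" using reals_Archimedean2 by blast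
    have e2: "\<epsilon>\<^sup>2 > 0" using ep by simp
    have "4 < real M * \<epsilon>\<^sup>2" using M e2 by (simp add: divide_less_eq)
    also have "\<dots> \<le> (real M + 1) * \<epsilon>\<^sup>2" using e2 by simp
    finally have "4 / (real M + 1) < \<epsilon>\<^sup>2" by (simp add: divide_less_eq mult.commute)
    show "\<exists>M. \<forall>m\<ge>M. \<forall>n\<ge>M. norm (xs m - xs n) < \<epsilon>"
    proof (intro exI allI impI)
      fix m n assume mn: "M \<le> m" "M \<le> n"
      have "2 / (real m + 1) \<le> 2 / (real M + 1)" "2 / (real n + 1) \<le> 2 / (real M + 1)"
        using mn by (auto simp: divide_simps)
      then have "(norm (xs m - xs n))\<^sup>2 < \<epsilon>\<^sup>2"
        using par[of m n] \<open>4 / (real M + 1) < \<epsilon>\<^sup>2\<close> by linarith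
      then show "norm (xs m - xs n) < \<epsilon>"
        using ep by (meson abs_le_square_iff norm_ge_zero not_le order_less_le_trans real_sqrt_abs
            power2_less_imp_less less_imp_le)
    qed
  qed
  then obtain s where s: "xs \<longlonglongrightarrow> s" using Cauchy_convergent_iff convergent_def by blast
  have sS: "s \<in> S" using cl s xs(1) closed_sequentially by blast
  have "(\<lambda>n. (norm (p - xs n))\<^sup>2) \<longlonglongrightarrow> (norm (p - s))\<^sup>2"
    by (intro tendsto_intros s)
  moreover have "(\<lambda>n. e + 1 / (real n + 1)) \<longlonglongrightarrow> e + 0"
    using LIMSEQ_inverse_real_of_nat
    by (intro tendsto_add tendsto_const) (simp add: inverse_eq_divide add.commute)
  ultimately have "(norm (p - s))\<^sup>2 \<le> e"
    using xs(2) by (intro LIMSEQ_le[of "\<lambda>n. (norm (p - xs n))\<^sup>2" _ "\<lambda>n. e + 1 / (real n + 1)"]) (auto intro: less_imp_le)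
  then have smin: "(norm (p - s))\<^sup>2 \<le> (norm (p - x))\<^sup>2" if "x \<in> S" for x
    using e_le[OF that] by linarith
  have "inner (p - s) x = 0" if xS: "x \<in> S" for x
  proof (cases "x = 0")
    case True then show ?thesis by simp
  next
    case False
    define t where "t = inner (p - s) x / inner x x"
    have xx: "inner x x > 0" using False by simp
    have "s + t *\<^sub>R x \<in> S" using sub sS xS by (simp add: subspace_add subspace_scale)
    from smin[OF this] have "(norm (p - s))\<^sup>2 \<le> (norm ((p - s) - t *\<^sub>R x))\<^sup>2"
      by (simp add: algebra_simps)
    then have "0 \<le> t * t * inner x x - 2 * t * inner (p - s) x"
      unfolding power2_norm_eq_inner
      by (simp add: inner_diff_left inner_diff_right inner_commute algebra_simps)
    also have "t * t * inner x x - 2 * t * inner (p - s) x = - (inner (p - s) x)\<^sup>2 / inner x x"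
      using xx unfolding t_def by (simp add: field_simps power2_eq_square)
    finally have "(inner (p - s) x)\<^sup>2 \<le> 0" using xx by (simp add: divide_simps)
    then show ?thesis by simp
  qed
  then show ?thesis using sS by blast
qed

lemma sq_le: fixes a b :: real assumes "0 \<le> a" "0 \<le> b" "a * a \<le> a * b" shows "a \<le> b"
proof (cases "a = 0")
  case True then show ?thesis using assms by simp
next
  case False then have "a > 0" using assms by simp
  then show ?thesis using assms(3) by (simp add: mult_le_cancel_left_pos)
qed

locale hop =
  fixes D :: "'a::{real_inner,complete_space} set" and A :: "'a \<Rightarrow> 'a"
  assumes lin: "lin_op D A" and dense: "densely_defined D" and clo: "closed_op D A"
begin

abbreviation "adj \<equiv> adj_op D A"
abbreviation "B \<equiv> B_op D A"
abbreviation "T \<equiv> (\<lambda>v. v - B v)"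

lemma subD: "subspace D" using lin by (simp add: lin_op_def)
lemma Aadd: "x \<in> D \<Longrightarrow> y \<in> D \<Longrightarrow> A (x + y) = A x + A y" using lin by (simp add: lin_op_def)
lemma Ascale: "x \<in> D \<Longrightarrow> A (c *\<^sub>R x) = c *\<^sub>R A x" using lin by (simp add: lin_op_def)
lemma D0: "0 \<in> D" using subD subspace_0 by blast
lemma Dadd: "x \<in> D \<Longrightarrow> y \<in> D \<Longrightarrow> x + y \<in> D" using subD subspace_add by blast
lemma Dscale: "x \<in> D \<Longrightarrow> c *\<^sub>R x \<in> D" using subD subspace_scale by blast
lemma Ddiff: "x \<in> D \<Longrightarrow> y \<in> D \<Longrightarrow> x - y \<in> D" using subD subspace_diff by blast
lemma A0: "A 0 = 0" using Ascale[OF D0, of 0] by simp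
lemma Aminus: "x \<in> D \<Longrightarrow> A (- x) = - A x" using Ascale[of x "-1"] by simp
lemma Adiff: "x \<in> D \<Longrightarrow> y \<in> D \<Longrightarrow> A (x - y) = A x - A y"
  using Aadd[of x "- y"] Aminus[of y] Dscale[of y "-1"] by simp

lemma orth_dense: assumes "\<forall>x\<in>D. inner x z = 0" shows "z = 0"
proof -
  have cl: "closed {x. inner x z = 0}"
    by (rule closed_Collect_eq) (intro continuous_intros)+
  have "D \<subseteq> {x. inner x z = 0}" using assms by auto
  then have "closure D \<subseteq> {x. inner x z = 0}" using cl by (rule closure_minimal)
  then have "z \<in> {x. inner x z = 0}" using dense unfolding densely_defined_def by blast
  then show ?thesis by simp
qed

lemma adj_unique: assumes "\<forall>x\<in>D. inner (A x) u = inner x w" shows "adj u = w"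
  unfolding adj_op_def
proof (rule the_equality)
  show "\<forall>x\<in>D. inner (A x) u = inner x w" by fact
  fix w' assume "\<forall>x\<in>D. inner (A x) u = inner x w'"
  then have "\<forall>x\<in>D. inner x (w' - w) = 0" using assms by (simp add: inner_diff_right)
  then show "w' = w" using orth_dense by fastforce
qed

lemma adj_eq: assumes "u \<in> adj_dom D A" "x \<in> D" shows "inner (A x) u = inner x (adj u)"
proof -
  obtain w where w: "\<forall>x\<in>D. inner (A x) u = inner x w" using assms(1) by (auto simp: adj_dom_def)
  then show ?thesis using adj_unique[OF w] assms(2) by simp
qed

lemma B_ex: "\<exists>u. u \<in> Q_dom D A \<and> u + Q_op D A u = v"
proof -
  define G where "G = (\<lambda>x. (x, A x)) ` D"
  have "subspace G" unfolding subspace_def G_def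
  proof (intro conjI ballI allI)
    show "0 \<in> (\<lambda>x. (x, A x)) ` D" using D0 A0 by (auto simp: zero_prod_def intro!: image_eqI[of _ _ 0])
  next
    fix x y assume "x \<in> (\<lambda>x. (x, A x)) ` D" "y \<in> (\<lambda>x. (x, A x)) ` D"
    then obtain a b where "a \<in> D" "b \<in> D" "x = (a, A a)" "y = (b, A b)" by auto
    then show "x + y \<in> (\<lambda>x. (x, A x)) ` D"
      using Aadd Dadd by (auto intro!: image_eqI[of _ _ "a + b"])
  next
    fix c :: real and x assume "x \<in> (\<lambda>x. (x, A x)) ` D"
    then obtain a where "a \<in> D" "x = (a, A a)" by auto
    then show "c *\<^sub>R x \<in> (\<lambda>x. (x, A x)) ` D"
      using Ascale Dscale by (auto intro!: image_eqI[of _ _ "c *\<^sub>R a"])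
  qed
  moreover have "closed G" using clo by (simp add: closed_op_def G_def)
  ultimately obtain s where "s \<in> G" and s: "\<forall>x\<in>G. inner ((0, v) - s) x = 0"
    using proj_exists by blast
  then obtain w where wD: "w \<in> D" and sw: "s = (w, A w)" by (auto simp: G_def)
  define u where "u = v - A w"
  have "\<forall>x\<in>D. inner (A x) u = inner x w"
  proof
    fix x assume "x \<in> D"
    then have "inner ((0, v) - s) (x, A x) = 0" using s by (auto simp: G_def)
    then show "inner (A x) u = inner x w"
      by (simp add: sw u_def inner_commute inner_diff_left)
  qed
  then have "u \<in> adj_dom D A" "adj u = w" using adj_unique by (auto simp: adj_dom_def)
  then have "u \<in> Q_dom D A" "u + Q_op D A u = v" using wD by (auto simp: Q_dom_def Q_op_def u_def)
  then show ?thesis by blast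
qed

lemma B_uniq: assumes "u1 \<in> Q_dom D A" "u2 \<in> Q_dom D A" "u1 + Q_op D A u1 = u2 + Q_op D A u2"
  shows "u1 = u2"
proof -
  define t where "t = adj u1 - adj u2"
  define d where "d = u1 - u2"
  have tD: "t \<in> D" using assms by (simp add: Q_dom_def t_def Ddiff)
  have d: "d = - A t" using assms
    by (auto simp: Q_dom_def Q_op_def d_def t_def Adiff algebra_simps)
  have "inner (A t) d = inner t t"
    using adj_eq[of u1 t] adj_eq[of u2 t] assms tD
    by (simp add: Q_dom_def d_def t_def inner_diff_right inner_diff_left)
  then have "inner d d + inner t t = 0" using d by (simp add: inner_minus_left)
  then have "inner d d = 0" using inner_ge_zero[of d] inner_ge_zero[of t] by linarith
  then show ?thesis by (simp add: d_def)
qed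

lemma B_prop: "B v \<in> Q_dom D A \<and> B v + Q_op D A (B v) = v"
  unfolding B_op_def
proof (rule theI')
  obtain u where u: "u \<in> Q_dom D A \<and> u + Q_op D A u = v" using B_ex by blast
  show "\<exists>!u. u \<in> Q_dom D A \<and> u + Q_op D A u = v"
  proof (rule ex1I[of _ u])
    show "u \<in> Q_dom D A \<and> u + Q_op D A u = v" by (rule u)
    fix u' assume "u' \<in> Q_dom D A \<and> u' + Q_op D A u' = v"
    then show "u' = u" using u B_uniq by auto
  qed
qed

lemma B_eqI: "u \<in> Q_dom D A \<Longrightarrow> u + Q_op D A u = v \<Longrightarrow> B v = u"
  using B_prop[of v] B_uniq[of u "B v"] by auto

lemma BadjD: "adj (B v) \<in> D" using B_prop[of v] by (simp add: Q_dom_def)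
lemma Bv: "v = B v + A (adj (B v))" using B_prop[of v] by (simp add: Q_op_def)
lemma Badj: "x \<in> D \<Longrightarrow> inner (A x) (B v) = inner x (adj (B v))"
  using B_prop[of v] adj_eq by (simp add: Q_dom_def)

lemma B_add: "B (v1 + v2) = B v1 + B v2"
proof (rule B_eqI)
  have e: "\<forall>x\<in>D. inner (A x) (B v1 + B v2) = inner x (adj (B v1) + adj (B v2))"
    using Badj by (simp add: inner_add_right)
  then have "adj (B v1 + B v2) = adj (B v1) + adj (B v2)" by (rule adj_unique)
  then show "B v1 + B v2 \<in> Q_dom D A" using e BadjD Dadd
    by (auto simp: Q_dom_def adj_dom_def)
  show "B v1 + B v2 + Q_op D A (B v1 + B v2) = v1 + v2"
    using \<open>adj (B v1 + B v2) = _\<close> Bv[of v1] Bv[of v2] BadjD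
    by (simp add: Q_op_def Aadd algebra_simps)
qed

lemma B_scale: "B (c *\<^sub>R v) = c *\<^sub>R B v"
proof (rule B_eqI)
  have e: "\<forall>x\<in>D. inner (A x) (c *\<^sub>R B v) = inner x (c *\<^sub>R adj (B v))"
    using Badj by simp
  then have "adj (c *\<^sub>R B v) = c *\<^sub>R adj (B v)" by (rule adj_unique)
  then show "c *\<^sub>R B v \<in> Q_dom D A" unfolding Q_dom_def adj_dom_def mem_Collect_eq
    using e BadjD Dscale by metis
  show "c *\<^sub>R B v + Q_op D A (c *\<^sub>R B v) = c *\<^sub>R v"
    using \<open>adj (c *\<^sub>R B v) = _\<close> Bv[of v] BadjD
    by (metis Q_op_def Ascale scaleR_add_right)
qed

lemma B_diff: "B (v1 - v2) = B v1 - B v2"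
  using B_add[of v1 "- v2"] B_scale[of "-1" v2] by simp

lemma B_facts:
  shows "inner (A (adj (B v))) (B v) = inner (adj (B v)) (adj (B v))"
  using Badj[OF BadjD] .

lemma norm_B_sq: "inner v v = inner (B v) (B v) + 2 * inner (adj (B v)) (adj (B v))
    + inner (A (adj (B v))) (A (adj (B v)))"
proof -
  have "inner v v = inner (B v + A (adj (B v))) (B v + A (adj (B v)))" using Bv[of v] by simp
  also have "\<dots> = inner (B v) (B v) + 2 * inner (A (adj (B v))) (B v)
    + inner (A (adj (B v))) (A (adj (B v)))"
    by (simp add: inner_add_left inner_add_right inner_commute[of "B v" "A (adj (B v))"])
  finally show ?thesis using B_facts by simp
qed

lemma norm_B: "norm (B v) \<le> norm v"
proof -
  have "inner (B v) (B v) \<le> inner v v" using norm_B_sq[of v]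
    inner_ge_zero[of "adj (B v)"] inner_ge_zero[of "A (adj (B v))"] by linarith
  then show ?thesis by (simp add: norm_le)
qed

lemma norm_adjB: "norm (adj (B v)) \<le> norm v"
proof -
  have "inner (adj (B v)) (adj (B v)) \<le> inner v v" using norm_B_sq[of v]
    inner_ge_zero[of "B v"] inner_ge_zero[of "adj (B v)"] inner_ge_zero[of "A (adj (B v))"] by linarith
  then show ?thesis by (simp add: norm_le)
qed

lemma B_sym: "inner (B v) z = inner v (B z)"
proof -
  have "inner (B v) z = inner (B v) (B z + A (adj (B z)))" using Bv[of z] by simp
  also have "\<dots> = inner (B v) (B z) + inner (A (adj (B z))) (B v)"
    by (simp add: inner_add_right inner_commute)
  also have "\<dots> = inner (B v) (B z) + inner (adj (B z)) (adj (B v))"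
    using Badj[OF BadjD, of z v] by simp
  also have "\<dots> = inner (B v) (B z) + inner (adj (B v)) (adj (B z))"
    by (simp add: inner_commute)
  also have "\<dots> = inner (B v) (B z) + inner (A (adj (B v))) (B z)"
    using Badj[OF BadjD, of v z] by simp
  also have "\<dots> = inner (B v + A (adj (B v))) (B z)"
    by (simp add: inner_add_left)
  finally show ?thesis using Bv[of v] by simp
qed

lemma T_sym: "inner (T v) z = inner v (T z)"
  using B_sym[of v z] by (simp add: inner_diff_left inner_diff_right)

lemma T_eq: "T v = A (adj (B v))" using Bv[of v] by (simp add: algebra_simps)

lemma T_nonneg: "0 \<le> inner (T v) v"
proof -
  have "inner (T v) v = inner (A (adj (B v))) v" by (simp only: T_eq)
  also have "\<dots> = inner (A (adj (B v))) (B v + A (adj (B v)))"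
    by (rule arg_cong[OF Bv[of v]])
  also have "\<dots> = inner (adj (B v)) (adj (B v)) + inner (A (adj (B v))) (A (adj (B v)))"
    using B_facts by (simp add: inner_add_right)
  finally show ?thesis by simp
qed

lemma T_sq: "inner (T v) (T v) \<le> inner (T v) v"
proof -
  have "inner (T v) v = inner (A (adj (B v))) v" by (simp only: T_eq)
  also have "\<dots> = inner (A (adj (B v))) (B v + A (adj (B v)))"
    by (rule arg_cong[OF Bv[of v]])
  also have "\<dots> = inner (adj (B v)) (adj (B v)) + inner (A (adj (B v))) (A (adj (B v)))"
    using B_facts by (simp add: inner_add_right)
  finally show ?thesis using T_eq[of v] by simp
qed

lemma T_le: "inner (T v) v \<le> inner v v"
proof -
  have "inner (T v) v = inner v v - inner (B v) v" by (simp add: inner_diff_left)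
  moreover have "inner (B v) v = inner (B v) (B v) + inner (adj (B v)) (adj (B v))"
  proof -
    have "inner (B v) v = inner (B v) (B v + A (adj (B v)))" by (rule arg_cong[OF Bv[of v]])
    then show ?thesis using B_facts by (simp add: inner_add_right inner_commute)
  qed
  ultimately show ?thesis using inner_ge_zero[of "B v"] inner_ge_zero[of "adj (B v)"] by linarith
qed

lemma norm_T: "norm (T v) \<le> norm v"
proof -
  have "(norm (T v))\<^sup>2 \<le> norm (T v) * norm v"
    using T_sq[of v] norm_cauchy_schwarz[of "T v" v] by (simp add: power2_norm_eq_inner)
  then show ?thesis using sq_le[OF norm_ge_zero norm_ge_zero] by (simp add: power2_eq_square)
qed

lemma B_inj: "B v = 0 \<Longrightarrow> v = 0"
proof -
  assume h: "B v = 0"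
  have "adj 0 = 0" by (rule adj_unique) simp
  have "v = B v + A (adj (B v))" by (rule Bv)
  also have "\<dots> = 0" using h A0 \<open>adj 0 = 0\<close> by simp
  finally show "v = 0" .
qed

lemma B_bl: "bounded_linear B"
  by (rule bounded_linear_intro[of _ 1]) (auto simp: B_add B_scale norm_B)

lemma BA_bound: assumes "x \<in> D" shows "norm (B (A x)) \<le> norm x"
proof -
  let ?z = "B (A x)"
  have "inner ?z ?z = inner (A x) (B ?z)" by (rule B_sym)
  also have "\<dots> = inner x (adj (B ?z))" using Badj[OF assms] .
  also have "\<dots> \<le> norm x * norm (adj (B ?z))" by (rule norm_cauchy_schwarz)
  also have "\<dots> \<le> norm x * norm ?z" by (rule mult_left_mono[OF norm_adjB]) simp
  finally have "inner ?z ?z \<le> norm x * norm ?z" .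
  moreover have "norm ?z * norm ?z = inner ?z ?z"
    by (simp add: power2_norm_eq_inner[symmetric] power2_eq_square)
  ultimately have "norm ?z * norm ?z \<le> norm ?z * norm x" by (simp add: mult.commute)
  then show ?thesis by (rule sq_le[OF norm_ge_zero norm_ge_zero])
qed

lemma closure_UNIV_set:
  assumes "closed S" "D \<subseteq> S" shows "x \<in> S"
proof -
  have "closure D \<subseteq> S" using assms closure_minimal by blast
  then show ?thesis using dense by (auto simp: densely_defined_def)
qed

lemma F_prop: "bounded_linear (F_op D A) \<and> (\<forall>x\<in>D. F_op D A x = B (A x))"
proof -
  define f0 where "f0 = (\<lambda>x. B (A x))"
  have lip: "norm (f0 x - f0 y) \<le> norm (x - y)" if "x \<in> D" "y \<in> D" for x y
  proof -
    have "f0 x - f0 y = B (A (x - y))" using that by (simp add: f0_def Adiff B_diff)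
    then show ?thesis using BA_bound[OF Ddiff[OF that]] by simp
  qed
  have uc: "uniformly_continuous_on D f0"
    unfolding uniformly_continuous_on_def dist_norm
  proof (intro allI impI)
    fix e :: real assume "e > 0"
    then show "\<exists>d>0. \<forall>x\<in>D. \<forall>x'\<in>D. norm (x' - x) < d \<longrightarrow> norm (f0 x' - f0 x) < e"
      using lip by (meson order_le_less_trans)
  qed
  obtain g where g1: "uniformly_continuous_on (closure D) g" and g2: "\<And>x. x \<in> D \<Longrightarrow> f0 x = g x"
    using uniformly_continuous_on_extension_on_closure[OF uc] by metis
  have gc: "continuous_on UNIV g"
    using uniformly_continuous_imp_continuous[OF g1] dense by (simp add: densely_defined_def)
  have add: "g (x + y) = g x + g y" for x y
  proof -
    let ?S = "{p :: 'a \<times> 'a. g (fst p + snd p) = g (fst p) + g (snd p)}"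
    have c1: "continuous_on UNIV (\<lambda>p::'a\<times>'a. g (fst p + snd p))"
      by (rule continuous_on_compose2[OF gc]) (auto intro!: continuous_intros)
    have c2: "continuous_on UNIV (\<lambda>p::'a\<times>'a. g (fst p) + g (snd p))"
      by (intro continuous_on_add continuous_on_compose2[OF gc]) (auto intro!: continuous_intros)
    have cl: "closed ?S" by (rule closed_Collect_eq[OF c1 c2])
    have sub: "D \<times> D \<subseteq> ?S"
    proof
      fix p assume "p \<in> D \<times> D"
      then obtain a b where ab: "p = (a, b)" "a \<in> D" "b \<in> D" by auto
      then have "g (a + b) = g a + g b"
        using g2[symmetric] Dadd[of a b] by (simp add: f0_def Aadd B_add)
      then show "p \<in> ?S" using ab by simp
    qed
    have "closure (D \<times> D) \<subseteq> ?S" using closure_minimal[OF sub cl] .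
    moreover have "closure (D \<times> D) = UNIV" using dense by (simp add: densely_defined_def closure_Times)
    ultimately have "(x, y) \<in> ?S" by blast
    then show ?thesis by simp
  qed
  have scale: "g (r *\<^sub>R x) = r *\<^sub>R g x" for r x
  proof -
    have "closed {x. g (r *\<^sub>R x) = r *\<^sub>R g x}"
      by (rule closed_Collect_eq)
        (auto intro!: continuous_intros continuous_on_compose2[OF gc])
    moreover have "D \<subseteq> {x. g (r *\<^sub>R x) = r *\<^sub>R g x}"
      using g2[symmetric] Dscale by (auto simp: f0_def Ascale B_scale)
    ultimately show ?thesis using closure_UNIV_set by blast
  qed
  have bnd: "norm (g x) \<le> norm x * 1" for x
  proof -
    have "closed {x. norm (g x) \<le> norm x}"
      by (rule closed_Collect_le)
        (auto intro!: continuous_intros continuous_on_compose2[OF gc])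
    moreover have "D \<subseteq> {x. norm (g x) \<le> norm x}"
      using g2[symmetric] BA_bound by (auto simp: f0_def)
    ultimately show ?thesis using closure_UNIV_set by fastforce
  qed
  have gbl: "bounded_linear g" by (rule bounded_linear_intro[OF add scale bnd])
  have gD: "\<forall>x\<in>D. g x = B (A x)" using g2 by (simp add: f0_def)
  have "F_op D A = g" unfolding F_op_def
  proof (rule the_equality)
    show "bounded_linear g \<and> (\<forall>x\<in>D. g x = B (A x))" using gbl gD by blast
    fix F assume F: "bounded_linear F \<and> (\<forall>x\<in>D. F x = B (A x))"
    show "F = g"
    proof
      fix x
      have "closed {x. F x = g x}"
        by (rule closed_Collect_eq) (use F gbl linear_continuous_on in blast)+
      moreover have "D \<subseteq> {x. F x = g x}" using F gD by auto
      ultimately show "F x = g x" using closure_UNIV_set by blast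
    qed
  qed
  then show ?thesis using gbl gD by simp
qed

lemma T_pow_Suc: "(T ^^ Suc k) w = T ((T ^^ k) w)" by simp

lemma T_lim: "(\<lambda>k. (T ^^ k) w) \<longlonglongrightarrow> 0"
proof -
  define c where "c k = inner ((T ^^ k) w) w" for k
  have cm: "inner ((T ^^ m) w) ((T ^^ n) w) = c (m + n)" for m n
  proof (induction m arbitrary: n)
    case 0 then show ?case by (simp add: c_def inner_commute)
  next
    case (Suc m)
    have "inner ((T ^^ Suc m) w) ((T ^^ n) w) = inner ((T ^^ m) w) (T ((T ^^ n) w))"
      using T_sym by simp
    also have "\<dots> = inner ((T ^^ m) w) ((T ^^ Suc n) w)" by simp
    also have "\<dots> = c (Suc m + n)" using Suc.IH[of "Suc n"] by simp
    finally show ?case .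
  qed
  have step: "c (Suc k) \<le> c k \<and> 0 \<le> c k" for k
  proof -
    obtain j where "k = 2 * j \<or> k = Suc (2 * j)" 
    proof -
      have "\<exists>j. k = 2 * j \<or> k = Suc (2 * j)" by presburger
      then show ?thesis using that by blast
    qed
    then show ?thesis
    proof
      assume k: "k = 2 * j"
      let ?u = "(T ^^ j) w"
      have "c k = inner ?u ?u" using cm[of j j] k by (simp add: mult_2)
      moreover have "c (Suc k) = inner (T ?u) ?u" using cm[of "Suc j" j] k by (simp add: mult_2)
      ultimately show ?thesis using T_le[of ?u] by simp
    next
      assume k: "k = Suc (2 * j)"
      let ?u = "(T ^^ j) w"
      have "c k = inner (T ?u) ?u" using cm[of "Suc j" j] k by (simp add: mult_2)
      moreover have "c (Suc k) = inner (T ?u) (T ?u)" using cm[of "Suc j" "Suc j"] k by (simp add: mult_2)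
      ultimately show ?thesis using T_sq[of ?u] T_nonneg[of ?u] by simp
    qed
  qed
  have "decseq c" using step by (simp add: decseq_Suc_iff)
  then obtain L where L: "c \<longlonglongrightarrow> L" using step decseq_convergent[of c 0] by blast
  have nd: "(norm ((T ^^ m) w - (T ^^ n) w))\<^sup>2 = c (2 * m) - 2 * c (m + n) + c (2 * n)" for m n
  proof -
    have "(norm ((T ^^ m) w - (T ^^ n) w))\<^sup>2 = inner ((T ^^ m) w) ((T ^^ m) w)
       - 2 * inner ((T ^^ m) w) ((T ^^ n) w) + inner ((T ^^ n) w) ((T ^^ n) w)"
      unfolding power2_norm_eq_inner
      by (simp add: inner_diff_left inner_diff_right inner_commute[of "(T ^^ n) w" "(T ^^ m) w"])
    moreover have "inner ((T ^^ m) w) ((T ^^ m) w) = c (2 * m)" using cm[of m m] by (simp add: mult_2)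
    moreover have "inner ((T ^^ n) w) ((T ^^ n) w) = c (2 * n)" using cm[of n n] by (simp add: mult_2)
    ultimately show ?thesis using cm[of m n] by linarith
  qed
  have "Cauchy (\<lambda>k. (T ^^ k) w)"
  proof (rule CauchyI)
    fix e :: real assume e: "e > 0"
    then have "e\<^sup>2 / 4 > 0" by simp
    then obtain M where M: "\<And>i. i \<ge> M \<Longrightarrow> norm (c i - L) < e\<^sup>2 / 4"
      using LIMSEQ_D[OF L] by blast
    show "\<exists>M. \<forall>m\<ge>M. \<forall>n\<ge>M. norm ((T ^^ m) w - (T ^^ n) w) < e"
    proof (intro exI allI impI)
      fix m n assume "M \<le> m" "M \<le> n"
      then have "norm (c (2*m) - L) < e\<^sup>2 / 4" "norm (c (m+n) - L) < e\<^sup>2 / 4" "norm (c (2*n) - L) < e\<^sup>2 / 4"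
        using M[of "2*m"] M[of "m+n"] M[of "2*n"] by auto
      then have "c (2*m) - L < e\<^sup>2 / 4" "L - c (m+n) < e\<^sup>2 / 4" "c (2*n) - L < e\<^sup>2 / 4"
        unfolding real_norm_def abs_less_iff by simp_all
      then have "(norm ((T ^^ m) w - (T ^^ n) w))\<^sup>2 < e\<^sup>2" using nd[of m n] by linarith
      then show "norm ((T ^^ m) w - (T ^^ n) w) < e"
        using e by (simp add: power_less_imp_less_base)
    qed
  qed
  then obtain p where p: "(\<lambda>k. (T ^^ k) w) \<longlonglongrightarrow> p" using Cauchy_convergent_iff convergent_def by blast
  have "(\<lambda>k. T ((T ^^ k) w)) \<longlonglongrightarrow> T p"
    by (intro tendsto_diff p bounded_linear.tendsto[OF B_bl])
  moreover have "(\<lambda>k. T ((T ^^ k) w)) \<longlonglongrightarrow> p"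
    using LIMSEQ_Suc[OF p] by simp
  ultimately have "T p = p" using LIMSEQ_unique by blast
  then have "B p = 0" by simp
  then have "p = 0" by (rule B_inj)
  then show ?thesis using p by simp
qed
end


theorem theorem2:
  fixes D :: "'a::{real_inner, complete_space} set" and A :: "'a \<Rightarrow> 'a"
    and f y v0 :: 'a and f\<delta> :: "real \<Rightarrow> 'a" and v :: "real \<Rightarrow> nat \<Rightarrow> 'a"
    and n :: "real \<Rightarrow> nat"
  assumes lin: "lin_op D A" and dense: "densely_defined D" and clo: "closed_op D A"
    and fD: "f \<in> D"
    and noise: "\<forall>\<delta>>0. norm (f\<delta> \<delta> - f) \<le> \<delta>"
    and y_sol: "B_op D A y = F_op D A f"
    and y_min: "\<forall>z. B_op D A z = F_op D A f \<longrightarrow> norm y \<le> norm z"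
    and v0_perp: "\<forall>u\<in>adj_null D A. inner v0 u = 0"
    and v_0: "\<forall>\<delta>. v \<delta> 0 = v0"
    and v_Suc: "\<forall>\<delta> k. v \<delta> (Suc k) = v \<delta> k - B_op D A (v \<delta> k) + F_op D A (f\<delta> \<delta>)"
    and n_inf: "filterlim n at_top (at_right 0)"
    and n_small: "((\<lambda>\<delta>. \<delta> * real (n \<delta>)) \<longlongrightarrow> 0) (at_right 0)"
  shows "((\<lambda>\<delta>. norm (v \<delta> (n \<delta>) - y)) \<longlongrightarrow> 0) (at_right 0)"
proof -
  interpret hop D A by unfold_locales (rule lin dense clo)+
  let ?F = "F_op D A"
  have Fbl: "bounded_linear ?F" using F_prop by blast
  obtain K where K: "K > 0" "\<And>x. norm (?F x) \<le> norm x * K"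
    using bounded_linear.pos_bounded[OF Fbl] by blast
  define e0 where "e0 = v0 - y"
  have est: "norm (v d k - y - (T ^^ k) e0) \<le> real k * (K * norm (f\<delta> d - f))" for d k
  proof (induction k)
    case 0 then show ?case using v_0 by (simp add: e0_def)
  next
    case (Suc k)
    let ?a = "v d k - y - (T ^^ k) e0"
    have Ba: "B ?a = B (v d k) - B y - B ((T ^^ k) e0)" by (simp add: B_diff)
    have Fa: "?F (f\<delta> d - f) = ?F (f\<delta> d) - ?F f"
      by (rule linear_diff[OF bounded_linear.linear[OF Fbl]])
    have vS: "v d (Suc k) = v d k - B (v d k) + ?F (f\<delta> d)" using v_Suc by blast
    have "T ?a + ?F (f\<delta> d - f) = (v d k - B (v d k) + ?F (f\<delta> d)) - y - ((T ^^ k) e0 - B ((T ^^ k) e0))"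
      unfolding Ba Fa using y_sol by (simp add: algebra_simps)
    then have "v d (Suc k) - y - (T ^^ Suc k) e0 = T ?a + ?F (f\<delta> d - f)"
      unfolding vS by simp
    then have "norm (v d (Suc k) - y - (T ^^ Suc k) e0) \<le> norm (T ?a) + norm (?F (f\<delta> d - f))"
      by (simp only: norm_triangle_ineq)
    also have "\<dots> \<le> norm ?a + norm (f\<delta> d - f) * K"
      using norm_T[of ?a] K(2)[of "f\<delta> d - f"] by linarith
    also have "\<dots> \<le> real (Suc k) * (K * norm (f\<delta> d - f))"
      using Suc.IH by (simp add: algebra_simps)
    finally show ?case .
  qed
  have b1: "((\<lambda>d. norm ((T ^^ n d) e0)) \<longlongrightarrow> 0) (at_right 0)"
    using filterlim_compose[OF T_lim[of e0] n_inf] by (simp add: tendsto_norm_zero)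
  have b2: "((\<lambda>d. K * (d * real (n d))) \<longlongrightarrow> 0) (at_right 0)"
    using tendsto_mult_right_zero[OF n_small, of K] by simp
  have b: "((\<lambda>d. norm ((T ^^ n d) e0) + K * (d * real (n d))) \<longlongrightarrow> 0) (at_right 0)"
    using tendsto_add[OF b1 b2] by simp
  have ev: "\<forall>\<^sub>F d in at_right 0. norm (v d (n d) - y) \<le> norm ((T ^^ n d) e0) + K * (d * real (n d))"
  proof -
    have "\<forall>\<^sub>F d in at_right (0::real). d > 0" by (simp add: eventually_at_right_less)
    then show ?thesis
    proof eventually_elim
      case (elim d)
      have "norm (v d (n d) - y) \<le> norm ((T ^^ n d) e0) + norm (v d (n d) - y - (T ^^ n d) e0)"
        by (metis add.commute diff_add_cancel norm_triangle_ineq)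
      also have "\<dots> \<le> norm ((T ^^ n d) e0) + real (n d) * (K * norm (f\<delta> d - f))"
        using est[of d "n d"] by simp
      also have "real (n d) * (K * norm (f\<delta> d - f)) \<le> real (n d) * (K * d)"
        using noise elim K(1) by (intro mult_left_mono) auto
      finally show ?case by (simp add: algebra_simps)
    qed
  qed
  show ?thesis
    by (rule tendsto_sandwich[OF _ ev tendsto_const b]) simp
qed

end
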